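(* Let $\mu$ be a $(C,\gamma)$-absolutely decaying measure on $\mathbb{R}$ with associated constant $\rho_0$, let $K=\operatorname{supp}\mu$, and let $0<\alpha\le\frac14\left(\frac{1}{3C}\right)^{1/\gamma}$. Then for every $0<\rho<\rho_0$, every $x_1\in K$ and every finite collection of points $y_1,\dots,y_N\in\mathbb{R}$, there exists $x_1'\in K$ with $B(x_1',\alpha\rho)\subset B(x_1,\rho)$ and such that for at least half of the indices $i\in\{1,\dots,N\}$ one has $d(B(x_1',\alpha\rho),y_i)>\alpha\rho$.
   Context: $B(x,\rho)$ denotes the closed interval $[x-\rho,x+\rho]$, and $d(A,y)=\inf_{a\in A}|a-y|$. A locally finite Borel measure $\mu$ on $\mathbb{R}$ is $(C,\gamma)$-absolutely decaying with constant $\rho_0>0$ if for all $0<\rho\le\rho_0$, $x\in\operatorname{supp}\mu$, $y\in\mathbb{R}$, $\varepsilon>0$: $\mu(B(x,\rho)\cap B(y,\varepsilon\rho))<C\varepsilon^\gamma\mu(B(x,\rho))$. *)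

theory Defs
  imports "HOL-Analysis.Analysis"
begin

definition locally_finite_borel :: "real measure \<Rightarrow> bool" where
  "locally_finite_borel M \<longleftrightarrow> sets M = sets borel \<and>
     (\<forall>x. \<exists>e>0. emeasure M (ball x e) < \<infinity>)"

definition msupp :: "real measure \<Rightarrow> real set" where
  "msupp M = {x. \<forall>e>0. emeasure M (ball x e) > 0}"

text \<open>(C,gamma)-absolutely decaying with constant rho0; B(x,rho) is the closed ball cball x rho.\<close>
definition abs_decaying :: "real measure \<Rightarrow> real \<Rightarrow> real \<Rightarrow> real \<Rightarrow> bool" where
  "abs_decaying M C \<gamma> \<rho>0 \<longleftrightarrow> locally_finite_borel M \<and> C > 0 \<and> \<gamma> > 0 \<and> \<rho>0 > 0 \<and>
     (\<forall>\<rho> x y \<epsilon>. 0 < \<rho> \<and> \<rho> \<le> \<rho>0 \<and> x \<in> msupp M \<and> \<epsilon> > 0 \<longrightarrow>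
        emeasure M (cball x \<rho> \<inter> cball y (\<epsilon> * \<rho>))
          < ennreal (C * \<epsilon> powr \<gamma>) * emeasure M (cball x \<rho>))"

end

theory Submission imports Defs begin

lemma cball_fin:
  assumes "locally_finite_borel M"
  shows "emeasure M (cball x r) < \<infinity>"
proof -
  have sm: "sets M = sets borel" using assms unfolding locally_finite_borel_def by blast
  obtain e where e: "\<And>z. e z > 0 \<and> emeasure M (ball z (e z)) < \<infinity>"
    using assms unfolding locally_finite_borel_def by metis
  have cv: "cball x r \<subseteq> (\<Union>z\<in>cball x r. ball z (e z))"
  proof
    fix w assume w: "w \<in> cball x r"
    have "w \<in> ball w (e w)" using e[of w] by simp
    then show "w \<in> (\<Union>z\<in>cball x r. ball z (e z))" using w by blast
  qed
  have "\<exists>D. D \<subseteq> cball x r \<and> finite D \<and> cball x r \<subseteq> (\<Union>z\<in>D. ball z (e z))"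
    by (rule compactE_image[OF compact_cball _ cv]) (simp, blast)
  then obtain D where D: "D \<subseteq> cball x r" "finite D" "cball x r \<subseteq> (\<Union>z\<in>D. ball z (e z))"
    by blast
  have "emeasure M (cball x r) \<le> emeasure M (\<Union>z\<in>D. ball z (e z))"
    by (rule emeasure_mono[OF D(3)], rule sets.finite_UN[OF D(2)]) (simp add: sm)
  also have "\<dots> \<le> (\<Sum>z\<in>D. emeasure M (ball z (e z)))"
    by (rule emeasure_subadditive_finite[OF D(2)]) (auto simp: sm)
  also have "\<dots> < top" using e D(2) by (simp add: infinity_ennreal_def)
  also have "(top::ennreal) = \<infinity>" by (simp add: infinity_ennreal_def)
  finally show ?thesis .
qed

lemma supp_null:
  assumes "sets M = sets borel"
  shows "- msupp M \<in> null_sets M"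
proof -
  define F where "F = {ball z e | z e. e > 0 \<and> emeasure M (ball z e) = 0}"
  have eq: "\<Union>F = - msupp M"
  proof
    show "\<Union>F \<subseteq> - msupp M"
    proof
      fix w assume "w \<in> \<Union>F"
      then obtain z e where ze: "e > 0" "emeasure M (ball z e) = 0" "w \<in> ball z e"
        unfolding F_def by blast
      define e' where "e' = e - dist z w"
      have "e' > 0" using ze unfolding e'_def by simp
      have "ball w e' \<subseteq> ball z e"
      proof
        fix v assume "v \<in> ball w e'"
        then show "v \<in> ball z e" using ze(3) dist_triangle[of z v w] unfolding e'_def by simp
      qed
      then have "emeasure M (ball w e') \<le> emeasure M (ball z e)"
        by (rule emeasure_mono) (simp add: assms)
      then have "emeasure M (ball w e') = 0" using ze by simp
      then show "w \<in> - msupp M" using \<open>e' > 0\<close> unfolding msupp_def by force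
    qed
    show "- msupp M \<subseteq> \<Union>F"
    proof
      fix w assume "w \<in> - msupp M"
      then obtain e where e0: "e > 0" and "\<not> emeasure M (ball w e) > 0" unfolding msupp_def by auto
      then have h0: "emeasure M (ball w e) = 0" using not_gr_zero by blast
      have "ball w e \<in> F" unfolding F_def using e0 h0 by blast
      moreover have "w \<in> ball w e" using e0 by simp
      ultimately show "w \<in> \<Union>F" by blast
    qed
  qed
  have opF: "\<And>S. S \<in> F \<Longrightarrow> open S" unfolding F_def by blast
  obtain F' where F': "F' \<subseteq> F" "countable F'" "\<Union>F' = \<Union>F"
    using Lindelof[OF opF] by blast
  have "(\<Union>S\<in>F'. S) \<in> null_sets M"
  proof (rule null_sets_UN'[OF F'(2)])
    fix S assume "S \<in> F'"
    then have "S \<in> F" using F' by auto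
    then obtain z e where "S = ball z e" "emeasure M (ball z e) = 0" unfolding F_def by blast
    then show "S \<in> null_sets M" using assms by (simp add: null_sets_def)
  qed
  then show ?thesis using F'(3) eq by simp
qed

lemma infdist_cball:
  fixes y x r :: real
  assumes "r \<ge> 0" "infdist y (cball x r) \<le> r"
  shows "dist y x \<le> 2 * r"
proof -
  have ne: "cball x r \<noteq> {}" using assms(1) by simp
  obtain z where z: "z \<in> cball x r" "infdist y (cball x r) = dist y z"
    using infdist_attains_inf[OF closed_cball ne, of y] by blast
  have "dist x z \<le> r" using z(1) by simp
  then show ?thesis using assms(2) z(2) dist_triangle[of y x z] dist_commute[of z x] by linarith
qed

theorem lemma3p2:
  fixes M :: "real measure" and C \<gamma> \<rho>0 \<alpha> \<rho> x1 :: real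
    and N :: nat and y :: "nat \<Rightarrow> real"
  assumes "abs_decaying M C \<gamma> \<rho>0"
    and "0 < \<alpha>" and "\<alpha> \<le> (1/4) * (1 / (3 * C)) powr (1 / \<gamma>)"
    and "0 < \<rho>" and "\<rho> < \<rho>0"
    and "x1 \<in> msupp M"
  shows "\<exists>x1' \<in> msupp M. cball x1' (\<alpha> * \<rho>) \<subseteq> cball x1 \<rho> \<and>
           2 * card {i \<in> {1..N}. infdist (y i) (cball x1' (\<alpha> * \<rho>)) > \<alpha> * \<rho>} \<ge> N"
proof -
  from assms(1) have lf: "locally_finite_borel M" and Cp: "C > 0" and gp: "\<gamma> > 0" and
    dec: "\<And>\<rho> x y \<epsilon>. 0 < \<rho> \<Longrightarrow> \<rho> \<le> \<rho>0 \<Longrightarrow> x \<in> msupp M \<Longrightarrow> \<epsilon> > 0 \<Longrightarrow>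
        emeasure M (cball x \<rho> \<inter> cball y (\<epsilon> * \<rho>))
          < ennreal (C * \<epsilon> powr \<gamma>) * emeasure M (cball x \<rho>)"
    unfolding abs_decaying_def by blast+
  have sm: "sets M = sets borel" using lf unfolding locally_finite_borel_def by blast
  define r where "r = \<alpha> * \<rho>"
  have rpos: "r > 0" using assms by (simp add: r_def)
  have key: "C * (4*\<alpha>) powr \<gamma> \<le> 1/3"
  proof -
    have H4: "4*\<alpha> \<le> (1/(3*C)) powr (1/\<gamma>)" using assms(3) by simp
    have "(4*\<alpha>) powr \<gamma> \<le> ((1/(3*C)) powr (1/\<gamma>)) powr \<gamma>"
      by (rule powr_mono2) (use gp assms(2) H4 in auto)
    also have "\<dots> = 1/(3*C)" using gp Cp by (simp add: powr_powr)
    finally show ?thesis using Cp by (simp add: field_simps)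
  qed
  have key2: "C * (\<alpha>/2) powr \<gamma> \<le> C * (4*\<alpha>) powr \<gamma>"
    using Cp gp assms(2) by (intro mult_left_mono powr_mono2) auto
  have \<rho>le: "\<rho> \<le> \<rho>0" using assms by simp
  obtain x2 where x2: "x2 \<in> msupp M" "dist x1 x2 \<le> \<rho> - r" "dist x1 x2 > 4*r"
  proof (rule ccontr)
    assume H: "\<not> thesis"
    then have H': "\<And>z. z \<in> msupp M \<Longrightarrow> dist x1 z \<le> \<rho> - r \<Longrightarrow> dist x1 z \<le> 4*r"
      using that by force
    define B where "B = cball x1 \<rho>"
    define X1 where "X1 = B \<inter> cball (x1 - \<rho> + r/2) ((\<alpha>/2)*\<rho>)"
    define X2 where "X2 = B \<inter> cball (x1 + \<rho> - r/2) ((\<alpha>/2)*\<rho>)"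
    define X3 where "X3 = B \<inter> cball x1 ((4*\<alpha>)*\<rho>)"
    have fin: "emeasure M B < \<infinity>" unfolding B_def by (rule cball_fin[OF lf])
    define m where "m = measure M B"
    have mB: "emeasure M B = ennreal m" using fin unfolding m_def
      by (simp add: emeasure_eq_ennreal_measure)
    have conv: "measure M X < c * m" if X: "X = B \<inter> cball a b"
       and lt: "emeasure M X < ennreal c * emeasure M B" and c: "c \<ge> 0" for X a b c
    proof -
      have "emeasure M X \<le> emeasure M B" using X sm by (intro emeasure_mono) (auto simp: B_def)
      then have "emeasure M X < \<infinity>" using fin by simp
      then have "emeasure M X = ennreal (measure M X)" by (simp add: emeasure_eq_ennreal_measure)
      moreover have "m \<ge> 0" by (simp add: m_def)
      ultimately have "ennreal (measure M X) < ennreal (c * m)" using lt mB c by (simp add: ennreal_mult)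
      then show ?thesis by (simp add: ennreal_less_iff)
    qed
    have c1: "measure M X1 < C * (\<alpha>/2) powr \<gamma> * m"
    proof (rule conv[OF X1_def])
      show "emeasure M X1 < ennreal (C * (\<alpha>/2) powr \<gamma>) * emeasure M B"
        unfolding X1_def B_def by (rule dec) (use assms in auto)
      show "C * (\<alpha>/2) powr \<gamma> \<ge> 0" using Cp by simp
    qed
    have c2: "measure M X2 < C * (\<alpha>/2) powr \<gamma> * m"
    proof (rule conv[OF X2_def])
      show "emeasure M X2 < ennreal (C * (\<alpha>/2) powr \<gamma>) * emeasure M B"
        unfolding X2_def B_def by (rule dec) (use assms in auto)
      show "C * (\<alpha>/2) powr \<gamma> \<ge> 0" using Cp by simp
    qed
    have c3: "measure M X3 < C * (4*\<alpha>) powr \<gamma> * m"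
    proof (rule conv[OF X3_def])
      show "emeasure M X3 < ennreal (C * (4*\<alpha>) powr \<gamma>) * emeasure M B"
        unfolding X3_def B_def by (rule dec) (use assms in auto)
      show "C * (4*\<alpha>) powr \<gamma> \<ge> 0" using Cp by simp
    qed
    have cov: "B \<inter> msupp M \<subseteq> X1 \<union> X2 \<union> X3"
    proof
      fix z assume z: "z \<in> B \<inter> msupp M"
      show "z \<in> X1 \<union> X2 \<union> X3"
      proof (cases "dist x1 z \<le> \<rho> - r")
        case True
        then have "dist x1 z \<le> 4*r" using H' z by auto
        moreover have "4*r = (4*\<alpha>)*\<rho>" by (simp add: r_def)
        ultimately have "z \<in> X3" using z by (simp add: X3_def)
        then show ?thesis by blast
      next
        case False
        have a: "\<bar>x1 - z\<bar> \<le> \<rho>" "\<bar>x1 - z\<bar> > \<rho> - r" using False z by (auto simp: B_def dist_real_def)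
        have h: "(\<alpha>/2)*\<rho> = r/2" by (simp add: r_def)
        have "\<bar>(x1 - \<rho> + r/2) - z\<bar> \<le> r/2 \<or> \<bar>(x1 + \<rho> - r/2) - z\<bar> \<le> r/2" using a by arith
        then show ?thesis using z unfolding X1_def X2_def h by (auto simp: dist_real_def)
      qed
    qed
    have nul: "- msupp M \<in> null_sets M" by (rule supp_null[OF sm])
    have "emeasure M B = emeasure M (B - (- msupp M))"
      by (rule emeasure_Diff_null_set[OF nul, symmetric]) (simp add: B_def sm)
    also have "B - (- msupp M) = B \<inter> msupp M" by blast
    also have "emeasure M (B \<inter> msupp M) \<le> emeasure M (X1 \<union> X2 \<union> X3)"
      by (rule emeasure_mono[OF cov]) (simp add: X1_def X2_def X3_def B_def sm)
    also have "\<dots> \<le> emeasure M (X1 \<union> X2) + emeasure M X3"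
      by (rule emeasure_subadditive) (simp_all add: X1_def X2_def X3_def B_def sm)
    also have "\<dots> \<le> emeasure M X1 + emeasure M X2 + emeasure M X3"
      by (intro add_right_mono emeasure_subadditive) (simp_all add: X1_def X2_def X3_def B_def sm)
    finally have le: "ennreal m \<le> emeasure M X1 + emeasure M X2 + emeasure M X3" using mB by simp
    have fx: "emeasure M X = ennreal (measure M X)" if "X \<subseteq> B" "X \<in> sets M" for X
    proof -
      have "emeasure M X \<le> emeasure M B" using that sm by (intro emeasure_mono) (auto simp: B_def)
      then have "emeasure M X < \<infinity>" using fin by simp
      then show ?thesis by (simp add: emeasure_eq_ennreal_measure)
    qed
    have "ennreal m \<le> ennreal (measure M X1 + measure M X2 + measure M X3)"
      using le fx[of X1] fx[of X2] fx[of X3]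
      by (simp add: X1_def X2_def X3_def B_def sm ennreal_plus)
    moreover have s0: "0 \<le> measure M X1 + measure M X2 + measure M X3" by simp
    ultimately have "m \<le> measure M X1 + measure M X2 + measure M X3"
      using ennreal_le_iff[OF s0, of m] by blast
    also have "\<dots> < (2 * (C * (\<alpha>/2) powr \<gamma>) + C * (4*\<alpha>) powr \<gamma>) * m"
    proof -
      have e: "(2 * (C * (\<alpha>/2) powr \<gamma>) + C * (4*\<alpha>) powr \<gamma>) * m =
         C * (\<alpha>/2) powr \<gamma> * m + C * (\<alpha>/2) powr \<gamma> * m + C * (4*\<alpha>) powr \<gamma> * m"
        by (simp add: algebra_simps)
      show ?thesis unfolding e using c1 c2 c3 by linarith
    qed
    also have "\<dots> \<le> 1 * m"
      using key key2 by (intro mult_right_mono) (auto simp: m_def)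
    finally show False by simp
  qed
  define G where "G x = {i \<in> {1..N}. infdist (y i) (cball x (\<alpha> * \<rho>)) > \<alpha> * \<rho>}" for x
  have "{1..N} \<subseteq> G x1 \<union> G x2"
  proof
    fix i assume i: "i \<in> {1..N}"
    show "i \<in> G x1 \<union> G x2"
    proof (rule ccontr)
      assume "i \<notin> G x1 \<union> G x2"
      then have "infdist (y i) (cball x1 r) \<le> r" "infdist (y i) (cball x2 r) \<le> r"
        using i unfolding G_def r_def by auto
      then have "dist (y i) x1 \<le> 2*r" "dist (y i) x2 \<le> 2*r"
        using infdist_cball[of r "y i"] rpos by auto
      then have "dist x1 x2 \<le> 4*r" using dist_triangle3[of x1 x2 "y i"] by simp
      then show False using x2 by simp
    qed
  qed
  then have "N \<le> card (G x1 \<union> G x2)"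
    using card_mono[of "G x1 \<union> G x2" "{1..N}"] by (simp add: G_def)
  also have "\<dots> \<le> card (G x1) + card (G x2)" by (rule card_Un_le)
  finally have NN: "N \<le> card (G x1) + card (G x2)" .
  have s1: "cball x1 (\<alpha> * \<rho>) \<subseteq> cball x1 \<rho>" using x2 rpos unfolding r_def
    by (intro subset_cball) linarith
  have s2: "cball x2 (\<alpha> * \<rho>) \<subseteq> cball x1 \<rho>"
  proof
    fix w assume "w \<in> cball x2 (\<alpha> * \<rho>)"
    then show "w \<in> cball x1 \<rho>" using x2 dist_triangle[of x1 w x2] by (simp add: r_def)
  qed
  show ?thesis
  proof (cases "2 * card (G x1) \<ge> N")
    case True
    then show ?thesis using s1 assms(6) unfolding G_def by blast
  next
    case False
    then have "2 * card (G x2) \<ge> N" using NN by simp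
    then show ?thesis using s2 x2(1) unfolding G_def by blast
  qed
qed

end
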